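(* Let $\Gamma$ be a gain operator on $\ell^\infty_+(\mathcal I)$ and $\hat\Gamma(s):=s\oplus\Gamma(s)$. The following are equivalent: (a) the system $\Sigma(\hat\Gamma)$ is UGS; (b) there exists a path $\sigma:\mathbb R_+\to\ell^\infty_+(\mathcal I)$ with $\sigma(r)\in\Psi(\Gamma)$ for all $r\ge0$, with $\varphi_{\min}(r)\mathbf 1\le\sigma(r)\le\varphi_{\max}(r)\mathbf 1$ for all $r\ge 0$ for some $\varphi_{\min},\varphi_{\max}\in\mathcal K_\infty$, and which is increasing; (c) there exists a path $\sigma:\mathbb R_+\to\ell^\infty_+(\mathcal I)$ with $\sigma(r)\in\Psi(\Gamma)$ for all $r\ge0$ and $\varphi_{\min}(r)\mathbf 1\le\sigma(r)\le\varphi_{\max}(r)\mathbf 1$ for all $r\ge0$ for some $\varphi_{\min},\varphi_{\max}\in\mathcal K_\infty$; (d) the set $\Psi(\Gamma)$ is uniformly cofinal.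
   Context: Let $\mathcal I$ be a nonempty countable index set. $\ell^\infty(\mathcal I)$ is the Banach space of real families $s=(s_i)_{i\in\mathcal I}$ with $\|s\|:=\sup_i|s_i|<\infty$, and $\ell^\infty_+(\mathcal I):=\{s:s_i\ge0\ \forall i\}$. $s^1\le s^2$ means $s^1_i\le s^2_i$ for all $i$; $\mathbf 1$ is the all-ones vector; $s^1\oplus s^2$ is the componentwise maximum. $\mathcal K$: continuous strictly increasing $\gamma:\mathbb R_+\to\mathbb R_+$ with $\gamma(0)=0$; $\mathcal K_\infty$: unbounded elements of $\mathcal K$. For $\mathcal J\subset\mathcal I$, $s_{|\mathcal J}$ agrees with $s$ on $\mathcal J$ and is $0$ elsewhere. Gain operator: for each $i$ a finite (possibly empty) $\mathcal I_i\subset\mathcal I\setminus\{i\}$; graph $\mathcal G$ with vertices $\mathcal I$ and edges $ji$, $j\in\mathcal I_i$; a pointwise equicontinuous family $\gamma_{ij}\in\mathcal K_\infty$ ($ji\in E(\mathcal G)$); functions $\mu_i:\ell^\infty_+(\mathcal I)\to[0,\infty]$ with (M1) some $\xi\in\mathcal K_\infty$ has $\mu_i(0)=0$, $\mu_i(s)\ge\xi(\|s\|)$; (M2) $\mu_i$ monotone w.r.t. $\le$; (M3) for each finite $\mathcal J$, $\mu_i$ restricted to vectors vanishing off $\mathcal J$ is finite-valued and continuous; (M4) for each norm-bounded $A$ and $\varepsilon>0$ there is $\delta>0$ with $\sup_i|\mu_i(s_{|\mathcal I_i})-\mu_i(s^0_{|\mathcal I_i})|\le\varepsilon$ whenever $s^0\in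 A$, $\|s-s^0\|\le\delta$. Then $\Gamma_i(s):=\mu_i([\gamma_{ij}(s_j)]_{j\in\mathcal I_i})$ (argument zero outside $\mathcal I_i$). For a monotone $T:\ell^\infty_+(\mathcal I)\to\ell^\infty_+(\mathcal I)$ with $T(0)=0$, $\Sigma(T)$ is the system $s^{n+1}=T(s^n)$; it is UGS if there is $\varphi\in\mathcal K_\infty$ with $\|T^n(s)\|\le\varphi(\|s\|)$ for all $s$, $n\ge0$. $\Psi(T):=\{s\in\ell^\infty_+(\mathcal I):T(s)\le s\}$. A set $A\subset\ell^\infty_+(\mathcal I)$ is uniformly cofinal if there is $\varphi\in\mathcal K_\infty$ such that every $s\in\ell^\infty_+(\mathcal I)$ has some $\hat s\in A$ with $s\le\hat s$ and $\|\hat s\|\le\varphi(\|s\|)$. A path $\sigma$ is increasing if $r_1\le r_2\Rightarrow\sigma(r_1)\le\sigma(r_2)$. *)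

theory Defs
  imports "HOL-Analysis.Analysis" "HOL-Library.Extended_Real"
begin

definition linf_plus :: "('i \<Rightarrow> real) set" where
  "linf_plus = {s. bdd_above (range (\<lambda>i. \<bar>s i\<bar>)) \<and> (\<forall>i. 0 \<le> s i)}"

definition supnorm :: "('i \<Rightarrow> real) \<Rightarrow> real" where
  "supnorm s = (SUP i. \<bar>s i\<bar>)"

definition vle :: "('i \<Rightarrow> real) \<Rightarrow> ('i \<Rightarrow> real) \<Rightarrow> bool" where
  "vle s1 s2 \<longleftrightarrow> (\<forall>i. s1 i \<le> s2 i)"

definition vmax :: "('i \<Rightarrow> real) \<Rightarrow> ('i \<Rightarrow> real) \<Rightarrow> ('i \<Rightarrow> real)" where
  "vmax s1 s2 = (\<lambda>i. max (s1 i) (s2 i))"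

definition restr :: "('i \<Rightarrow> real) \<Rightarrow> 'i set \<Rightarrow> ('i \<Rightarrow> real)" where
  "restr s J = (\<lambda>i. if i \<in> J then s i else 0)"

definition class_K :: "(real \<Rightarrow> real) \<Rightarrow> bool" where
  "class_K g \<longleftrightarrow> g 0 = 0 \<and> continuous_on {0..} g \<and> strict_mono_on {0..} g
     \<and> (\<forall>r\<ge>0. 0 \<le> g r)"

definition class_Kinf :: "(real \<Rightarrow> real) \<Rightarrow> bool" where
  "class_Kinf g \<longleftrightarrow> class_K g \<and> (\<forall>M. \<exists>r\<ge>0. M < g r)"

definition gain_data ::
  "('i \<Rightarrow> 'i set) \<Rightarrow> ('i \<Rightarrow> 'i \<Rightarrow> real \<Rightarrow> real) \<Rightarrow> ('i \<Rightarrow> ('i \<Rightarrow> real) \<Rightarrow> ereal) \<Rightarrow> bool" where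
  "gain_data Ii gam mu \<longleftrightarrow>
     (\<forall>i. finite (Ii i) \<and> i \<notin> Ii i)
   \<and> (\<forall>i. \<forall>j\<in>Ii i. class_Kinf (gam i j))
   \<comment> \<open>pointwise equicontinuity of the family of gains\<close>
   \<and> (\<forall>r\<ge>0. \<forall>\<epsilon>>0. \<exists>\<delta>>0. \<forall>i. \<forall>j\<in>Ii i. \<forall>r'\<ge>0.
         \<bar>r' - r\<bar> \<le> \<delta> \<longrightarrow> \<bar>gam i j r' - gam i j r\<bar> \<le> \<epsilon>)
   \<comment> \<open>values in [0, infinity]\<close>
   \<and> (\<forall>i. \<forall>s\<in>linf_plus. 0 \<le> mu i s)
   \<comment> \<open>(M1)\<close>
   \<and> (\<exists>\<xi>. class_Kinf \<xi> \<and> (\<forall>i. mu i (\<lambda>_. 0) = 0 \<and>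
         (\<forall>s\<in>linf_plus. ereal (\<xi> (supnorm s)) \<le> mu i s)))
   \<comment> \<open>(M2)\<close>
   \<and> (\<forall>i. \<forall>s1\<in>linf_plus. \<forall>s2\<in>linf_plus. vle s1 s2 \<longrightarrow> mu i s1 \<le> mu i s2)
   \<comment> \<open>(M3)\<close>
   \<and> (\<forall>i J. finite J \<longrightarrow>
         (\<forall>s\<in>linf_plus. (\<forall>j. j \<notin> J \<longrightarrow> s j = 0) \<longrightarrow> mu i s \<noteq> \<infinity>)
       \<and> (\<forall>s0\<in>linf_plus. (\<forall>j. j \<notin> J \<longrightarrow> s0 j = 0) \<longrightarrow>
            (\<forall>\<epsilon>>0. \<exists>\<delta>>0. \<forall>s\<in>linf_plus. (\<forall>j. j \<notin> J \<longrightarrow> s j = 0) \<longrightarrow>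
               supnorm (\<lambda>k. s k - s0 k) < \<delta> \<longrightarrow>
               \<bar>real_of_ereal (mu i s) - real_of_ereal (mu i s0)\<bar> < \<epsilon>)))
   \<comment> \<open>(M4)\<close>
   \<and> (\<forall>A. A \<subseteq> linf_plus \<longrightarrow> bdd_above (supnorm ` A) \<longrightarrow>
        (\<forall>\<epsilon>>0. \<exists>\<delta>>0. \<forall>s0\<in>A. \<forall>s\<in>linf_plus.
            supnorm (\<lambda>k. s k - s0 k) \<le> \<delta> \<longrightarrow>
            (\<forall>i. \<bar>real_of_ereal (mu i (restr s (Ii i))) - real_of_ereal (mu i (restr s0 (Ii i)))\<bar> \<le> \<epsilon>)))"

definition gain_op ::
  "('i \<Rightarrow> 'i set) \<Rightarrow> ('i \<Rightarrow> 'i \<Rightarrow> real \<Rightarrow> real) \<Rightarrow> ('i \<Rightarrow> ('i \<Rightarrow> real) \<Rightarrow> ereal)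
   \<Rightarrow> ('i \<Rightarrow> real) \<Rightarrow> ('i \<Rightarrow> real)" where
  "gain_op Ii gam mu s = (\<lambda>i. real_of_ereal (mu i (\<lambda>j. if j \<in> Ii i then gam i j (s j) else 0)))"

definition UGS :: "(('i \<Rightarrow> real) \<Rightarrow> ('i \<Rightarrow> real)) \<Rightarrow> bool" where
  "UGS T \<longleftrightarrow> (\<exists>\<phi>. class_Kinf \<phi> \<and>
     (\<forall>s\<in>linf_plus. \<forall>n. supnorm ((T ^^ n) s) \<le> \<phi> (supnorm s)))"

definition Psi :: "(('i \<Rightarrow> real) \<Rightarrow> ('i \<Rightarrow> real)) \<Rightarrow> ('i \<Rightarrow> real) set" where
  "Psi T = {s\<in>linf_plus. vle (T s) s}"

definition unif_cofinal :: "('i \<Rightarrow> real) set \<Rightarrow> bool" where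
  "unif_cofinal A \<longleftrightarrow> (\<exists>\<phi>. class_Kinf \<phi> \<and>
     (\<forall>s\<in>linf_plus. \<exists>sh\<in>A. vle s sh \<and> supnorm sh \<le> \<phi> (supnorm s)))"

definition increasing_path :: "(real \<Rightarrow> ('i \<Rightarrow> real)) \<Rightarrow> bool" where
  "increasing_path \<sigma> \<longleftrightarrow> (\<forall>r1 r2. 0 \<le> r1 \<longrightarrow> r1 \<le> r2 \<longrightarrow> vle (\<sigma> r1) (\<sigma> r2))"

definition bounded_Psi_path ::
  "(('i \<Rightarrow> real) \<Rightarrow> ('i \<Rightarrow> real)) \<Rightarrow> (real \<Rightarrow> ('i \<Rightarrow> real)) \<Rightarrow> bool" where
  "bounded_Psi_path T \<sigma> \<longleftrightarrow> (\<forall>r\<ge>0. \<sigma> r \<in> Psi T) \<and>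
     (\<exists>\<phi>min \<phi>max. class_Kinf \<phi>min \<and> class_Kinf \<phi>max \<and>
        (\<forall>r\<ge>0. vle (\<lambda>_. \<phi>min r) (\<sigma> r) \<and> vle (\<sigma> r) (\<lambda>_. \<phi>max r)))"

end

theory Submission
  imports Defs
begin

lemma linf_plusI: "(\<And>i. 0 \<le> s i) \<Longrightarrow> (\<And>i. s i \<le> c) \<Longrightarrow> s \<in> linf_plus"
  unfolding linf_plus_def bdd_above_def by auto

lemma linf_plus_nonneg: "s \<in> linf_plus \<Longrightarrow> 0 \<le> s i"
  unfolding linf_plus_def by auto

lemma linf_plus_bdd: "s \<in> linf_plus \<Longrightarrow> bdd_above (range s)"
proof -
  assume "s \<in> linf_plus"
  then have "bdd_above (range (\<lambda>i. \<bar>s i\<bar>))" "\<forall>i. 0 \<le> s i" unfolding linf_plus_def by auto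
  then show ?thesis by (simp add: bdd_above_def)
qed

lemma le_supnorm: "s \<in> linf_plus \<Longrightarrow> s i \<le> supnorm s"
proof -
  assume a: "s \<in> linf_plus"
  then have "bdd_above (range (\<lambda>i. \<bar>s i\<bar>))" unfolding linf_plus_def by auto
  then have "\<bar>s i\<bar> \<le> supnorm s" unfolding supnorm_def by (rule cSUP_upper[OF UNIV_I])
  then show ?thesis by simp
qed

lemma supnorm_nonneg: "s \<in> linf_plus \<Longrightarrow> 0 \<le> supnorm s"
proof -
  assume a: "s \<in> linf_plus"
  have "0 \<le> s undefined" using linf_plus_nonneg[OF a] .
  also have "\<dots> \<le> supnorm s" using le_supnorm[OF a] .
  finally show ?thesis .
qed

lemma supnorm_le: "(\<And>i. \<bar>s i\<bar> \<le> c) \<Longrightarrow> supnorm s \<le> c"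
  unfolding supnorm_def by (rule cSUP_least) auto

lemma supnorm_mono: "s \<in> linf_plus \<Longrightarrow> vle s t \<Longrightarrow> t \<in> linf_plus \<Longrightarrow> supnorm s \<le> supnorm t"
  apply (rule supnorm_le)
  by (metis abs_of_nonneg le_supnorm linf_plus_nonneg order_trans vle_def)

lemma Kinf_mono: "class_Kinf g \<Longrightarrow> 0 \<le> x \<Longrightarrow> x \<le> y \<Longrightarrow> g x \<le> g y"
  unfolding class_Kinf_def class_K_def strict_mono_on_def
  by (metis atLeast_iff dual_order.order_iff_strict order_trans)

lemma Kinf_less: "class_Kinf g \<Longrightarrow> 0 \<le> x \<Longrightarrow> x < y \<Longrightarrow> g x < g y"
  unfolding class_Kinf_def class_K_def strict_mono_on_def by auto

lemma Kinf_nonneg: "class_Kinf g \<Longrightarrow> 0 \<le> x \<Longrightarrow> 0 \<le> g x"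
  unfolding class_Kinf_def class_K_def by auto

lemma Kinf_zero: "class_Kinf g \<Longrightarrow> g 0 = 0"
  unfolding class_Kinf_def class_K_def by auto

lemma Kinf_cont: "class_Kinf g \<Longrightarrow> continuous_on {0..} g"
  unfolding class_Kinf_def class_K_def by auto

lemma Kinf_id: "class_Kinf (\<lambda>x. x)"
  unfolding class_Kinf_def class_K_def strict_mono_on_def
proof (intro conjI allI impI ballI)
  show "\<exists>r\<ge>0. M < r" for M :: real by (intro exI[of _ "\<bar>M\<bar>+1"]) auto
qed (auto intro: continuous_intros)

lemma Kinf_comp: "class_Kinf f \<Longrightarrow> class_Kinf g \<Longrightarrow> class_Kinf (\<lambda>x. f (g x))"
proof -
  assume f: "class_Kinf f" and g: "class_Kinf g"
  have c: "continuous_on {0..} (\<lambda>x. f (g x))"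
    apply (rule continuous_on_compose2[OF Kinf_cont[OF f] Kinf_cont[OF g]])
    using Kinf_nonneg[OF g] by auto
  have u: "\<exists>r\<ge>0. M < f (g r)" for M
  proof -
    obtain r where r: "r \<ge> 0" "M < f r" using f unfolding class_Kinf_def by auto
    obtain r' where r': "r' \<ge> 0" "r < g r'" using g unfolding class_Kinf_def by auto
    have "f r \<le> f (g r')" using Kinf_mono[OF f r(1)] r' by auto
    then show ?thesis using r r' by (intro exI[of _ r']) auto
  qed
  show ?thesis unfolding class_Kinf_def class_K_def
    using c u Kinf_zero[OF f] Kinf_zero[OF g] Kinf_nonneg[OF f] Kinf_nonneg[OF g]
      Kinf_less[OF f] Kinf_less[OF g]
    by (auto simp: strict_mono_on_def)
qed

lemma Kinf_inv:
  assumes g: "class_Kinf g"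
  shows "\<exists>h. class_Kinf h \<and> (\<forall>y\<ge>0. g (h y) = y \<and> 0 \<le> h y)"
proof -
  have ex: "\<exists>x\<ge>0. g x = y" if "y \<ge> 0" for y
  proof -
    obtain r where r: "r \<ge> 0" "y < g r" using g unfolding class_Kinf_def by auto
    show ?thesis using IVT'[of g 0 y r] r that Kinf_zero[OF g] continuous_on_subset[OF Kinf_cont[OF g]]
      by fastforce
  qed
  define h where "h y = (SOME x. x \<ge> 0 \<and> g x = y)" for y
  have h: "h y \<ge> 0 \<and> g (h y) = y" if "y \<ge> 0" for y
    unfolding h_def by (rule someI_ex) (use ex that in auto)
  have hle: "h y1 < h y2" if "0 \<le> y1" "y1 < y2" for y1 y2
    using h[of y1] h[of y2] that Kinf_mono[OF g, of "h y2" "h y1"] by force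
  have hg: "h (g x) = x" if "x \<ge> 0" for x
  proof -
    have a: "0 \<le> h (g x)" "g (h (g x)) = g x" using h[of "g x"] Kinf_nonneg[OF g that] by auto
    show ?thesis
    proof (rule ccontr)
      assume "h (g x) \<noteq> x"
      then consider "h (g x) < x" | "x < h (g x)" by linarith
      then show False using Kinf_less[OF g] a that by (cases; fastforce)
    qed
  qed
  have lt1: "y' < g b \<Longrightarrow> 0 \<le> y' \<Longrightarrow> 0 \<le> b \<Longrightarrow> h y' < b" for y' b
    using hle hg by (metis Kinf_nonneg g)
  have lt2: "g a < y' \<Longrightarrow> 0 \<le> a \<Longrightarrow> a < h y'" for y' a
    using hle hg by (metis Kinf_nonneg g)
  have cont: "continuous_on {0..} h"
    unfolding continuous_on_iff
  proof (intro ballI allI impI)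
    fix y e :: real assume y: "y \<in> {0..}" and e: "0 < e"
    define x where "x = h y"
    have x: "x \<ge> 0" "g x = y" using h y x_def by auto
    define a where "a = max 0 (x - e)"
    define b where "b = x + e"
    have gb: "y < g b" using Kinf_less[OF g x(1), of b] x e b_def by auto
    define d where "d = min (g b - y) (if y > 0 then y - g a else 1)"
    have ga: "y > 0 \<Longrightarrow> g a < y"
    proof -
      assume "y > 0"
      then have "x > 0" using x Kinf_zero[OF g] by (metis less_eq_real_def)
      then have "a < x" using e a_def by auto
      then show ?thesis using Kinf_less[OF g, of a x] a_def x by auto
    qed
    have "d > 0" using gb ga unfolding d_def by auto
    moreover have "dist (h y') (h y) < e" if "y' \<in> {0..}" "dist y' y < d" for y'
    proof -
      have "y' < g b" using that d_def by (auto simp: dist_real_def)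
      then have 1: "h y' < b" using lt1 that x e b_def by auto
      have 2: "h y' > x - e"
      proof (cases "y > 0")
        case True
        then have "g a < y'" using that d_def by (auto simp: dist_real_def)
        moreover have "0 \<le> a" unfolding a_def by simp
        ultimately have "a < h y'" using lt2 by blast
        then show ?thesis using a_def by auto
      next
        case False
        then have "y = 0" using y by auto
        then have "x = 0" using hg[of 0] Kinf_zero[OF g] x_def by auto
        then show ?thesis using h[of y'] that e by auto
      qed
      show ?thesis using 1 2 b_def x_def by (auto simp: dist_real_def)
    qed
    ultimately show "\<exists>d>0. \<forall>y'\<in>{0..}. dist y' y < d \<longrightarrow> dist (h y') (h y) < e" by blast
  qed
  have "class_Kinf h" unfolding class_Kinf_def class_K_def strict_mono_on_def
  proof (intro conjI allI impI ballI)
    show "h 0 = 0" using hg[of 0] Kinf_zero[OF g] by auto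
    show "\<exists>r\<ge>0. M < h r" for M
      using hg[of "\<bar>M\<bar> + 1"] Kinf_nonneg[OF g, of "\<bar>M\<bar> + 1"] by (intro exI[of _ "g (\<bar>M\<bar>+1)"]) auto
  qed (use cont hle h in auto)
  then show ?thesis using h by blast
qed


lemma gd_conj:
  assumes "gain_data Ii gam mu"
  shows "\<forall>i. finite (Ii i) \<and> i \<notin> Ii i"
  "\<forall>i. \<forall>j\<in>Ii i. class_Kinf (gam i j)"
  "\<forall>r\<ge>0. \<forall>\<epsilon>>0. \<exists>\<delta>>0. \<forall>i. \<forall>j\<in>Ii i. \<forall>r'\<ge>0.
         \<bar>r' - r\<bar> \<le> \<delta> \<longrightarrow> \<bar>gam i j r' - gam i j r\<bar> \<le> \<epsilon>"
  "\<forall>i. \<forall>s\<in>linf_plus. 0 \<le> mu i s"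
  "\<exists>\<xi>. class_Kinf \<xi> \<and> (\<forall>i. mu i (\<lambda>_. 0) = 0 \<and>
         (\<forall>s\<in>linf_plus. ereal (\<xi> (supnorm s)) \<le> mu i s))"
  "\<forall>i. \<forall>s1\<in>linf_plus. \<forall>s2\<in>linf_plus. vle s1 s2 \<longrightarrow> mu i s1 \<le> mu i s2"
  "\<forall>i J. finite J \<longrightarrow>
         (\<forall>s\<in>linf_plus. (\<forall>j. j \<notin> J \<longrightarrow> s j = 0) \<longrightarrow> mu i s \<noteq> \<infinity>)
       \<and> (\<forall>s0\<in>linf_plus. (\<forall>j. j \<notin> J \<longrightarrow> s0 j = 0) \<longrightarrow>
            (\<forall>\<epsilon>>0. \<exists>\<delta>>0. \<forall>s\<in>linf_plus. (\<forall>j. j \<notin> J \<longrightarrow> s j = 0) \<longrightarrow>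
               supnorm (\<lambda>k. s k - s0 k) < \<delta> \<longrightarrow>
               \<bar>real_of_ereal (mu i s) - real_of_ereal (mu i s0)\<bar> < \<epsilon>))"
  "\<forall>A. A \<subseteq> linf_plus \<longrightarrow> bdd_above (supnorm ` A) \<longrightarrow>
        (\<forall>\<epsilon>>0. \<exists>\<delta>>0. \<forall>s0\<in>A. \<forall>s\<in>linf_plus.
            supnorm (\<lambda>k. s k - s0 k) \<le> \<delta> \<longrightarrow>
            (\<forall>i. \<bar>real_of_ereal (mu i (restr s (Ii i))) - real_of_ereal (mu i (restr s0 (Ii i)))\<bar> \<le> \<epsilon>))"
  apply (insert assms[unfolded gain_data_def]) apply (elim conjE, assumption)+ done

lemma gd_fin: "gain_data Ii gam mu \<Longrightarrow> finite (Ii i)"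
  using gd_conj(1) by blast
lemma gd_gam: "gain_data Ii gam mu \<Longrightarrow> j \<in> Ii i \<Longrightarrow> class_Kinf (gam i j)"
  using gd_conj(2) by blast
lemma gd_equi: "gain_data Ii gam mu \<Longrightarrow> r \<ge> 0 \<Longrightarrow> \<epsilon> > 0 \<Longrightarrow> \<exists>\<delta>>0. \<forall>i. \<forall>j\<in>Ii i. \<forall>r'\<ge>0.
         \<bar>r' - r\<bar> \<le> \<delta> \<longrightarrow> \<bar>gam i j r' - gam i j r\<bar> \<le> \<epsilon>"
  using gd_conj(3) by blast
lemma gd_nonneg: "gain_data Ii gam mu \<Longrightarrow> s \<in> linf_plus \<Longrightarrow> 0 \<le> mu i s"
  using gd_conj(4) by blast
lemma gd_mu0: "gain_data Ii gam mu \<Longrightarrow> mu i (\<lambda>_. 0) = 0"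
  using gd_conj(5) by blast
lemma gd_mono: "gain_data Ii gam mu \<Longrightarrow> s1 \<in> linf_plus \<Longrightarrow> s2 \<in> linf_plus \<Longrightarrow> vle s1 s2 \<Longrightarrow> mu i s1 \<le> mu i s2"
  using gd_conj(6) by blast
lemma gd_M3fin: "gain_data Ii gam mu \<Longrightarrow> finite J \<Longrightarrow> s \<in> linf_plus \<Longrightarrow> (\<forall>j. j \<notin> J \<longrightarrow> s j = 0) \<Longrightarrow> mu i s \<noteq> \<infinity>"
  using gd_conj(7) by blast
lemma gd_M3cont: "gain_data Ii gam mu \<Longrightarrow> finite J \<Longrightarrow> s0 \<in> linf_plus \<Longrightarrow> (\<forall>j. j \<notin> J \<longrightarrow> s0 j = 0) \<Longrightarrow> \<epsilon> > 0 \<Longrightarrow>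
  \<exists>\<delta>>0. \<forall>s\<in>linf_plus. (\<forall>j. j \<notin> J \<longrightarrow> s j = 0) \<longrightarrow>
               supnorm (\<lambda>k. s k - s0 k) < \<delta> \<longrightarrow>
               \<bar>real_of_ereal (mu i s) - real_of_ereal (mu i s0)\<bar> < \<epsilon>"
proof -
  assume a: "gain_data Ii gam mu" "finite J" "s0 \<in> linf_plus" "\<forall>j. j \<notin> J \<longrightarrow> s0 j = 0" "\<epsilon> > 0"
  have "\<forall>s0\<in>linf_plus. (\<forall>j. j \<notin> J \<longrightarrow> s0 j = 0) \<longrightarrow>
            (\<forall>\<epsilon>>0. \<exists>\<delta>>0. \<forall>s\<in>linf_plus. (\<forall>j. j \<notin> J \<longrightarrow> s j = 0) \<longrightarrow>
               supnorm (\<lambda>k. s k - s0 k) < \<delta> \<longrightarrow>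
               \<bar>real_of_ereal (mu i s) - real_of_ereal (mu i s0)\<bar> < \<epsilon>)"
    using gd_conj(7)[OF a(1)] a(2) by blast
  then show ?thesis using a(3-5) by blast
qed
lemma gd_M4: "gain_data Ii gam mu \<Longrightarrow> A \<subseteq> linf_plus \<Longrightarrow> bdd_above (supnorm ` A) \<Longrightarrow> \<epsilon> > 0 \<Longrightarrow>
  \<exists>\<delta>>0. \<forall>s0\<in>A. \<forall>s\<in>linf_plus.
            supnorm (\<lambda>k. s k - s0 k) \<le> \<delta> \<longrightarrow>
            (\<forall>i. \<bar>real_of_ereal (mu i (restr s (Ii i))) - real_of_ereal (mu i (restr s0 (Ii i)))\<bar> \<le> \<epsilon>)"
  using gd_conj(8) by blast

definition vI :: "('i \<Rightarrow> 'i set) \<Rightarrow> ('i \<Rightarrow> 'i \<Rightarrow> real \<Rightarrow> real) \<Rightarrow> 'i \<Rightarrow> ('i \<Rightarrow> real) \<Rightarrow> ('i \<Rightarrow> real)" where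
  "vI Ii gam i s = (\<lambda>j. if j \<in> Ii i then gam i j (s j) else 0)"

lemma gain_op_eq: "gain_op Ii gam mu s i = real_of_ereal (mu i (vI Ii gam i s))"
  unfolding gain_op_def vI_def by simp

lemma vI_van: "j \<notin> Ii i \<Longrightarrow> vI Ii gam i s j = 0"
  unfolding vI_def by simp

lemma vI_linf:
  assumes gd: "gain_data Ii gam mu" and s: "s \<in> linf_plus"
  shows "vI Ii gam i s \<in> linf_plus"
proof (rule linf_plusI)
  show "0 \<le> vI Ii gam i s j" for j
    unfolding vI_def using Kinf_nonneg[OF gd_gam[OF gd]] linf_plus_nonneg[OF s] by auto
  show "vI Ii gam i s j \<le> Max (insert 0 ((\<lambda>j. gam i j (s j)) ` Ii i))" for j
    unfolding vI_def using gd_fin[OF gd] by (auto intro: Max_ge)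
qed

lemma mu_vI:
  assumes gd: "gain_data Ii gam mu" and s: "s \<in> linf_plus"
  shows "mu i (vI Ii gam i s) = ereal (gain_op Ii gam mu s i)" "0 \<le> gain_op Ii gam mu s i"
proof -
  have f: "mu i (vI Ii gam i s) \<noteq> \<infinity>"
    by (rule gd_M3fin[OF gd gd_fin[OF gd, of i] vI_linf[OF gd s]]) (auto simp: vI_van)
  have n: "0 \<le> mu i (vI Ii gam i s)" by (rule gd_nonneg[OF gd vI_linf[OF gd s]])
  show "mu i (vI Ii gam i s) = ereal (gain_op Ii gam mu s i)" unfolding gain_op_eq
    using f n by (cases "mu i (vI Ii gam i s)") auto
  show "0 \<le> gain_op Ii gam mu s i" unfolding gain_op_eq using n by (simp add: real_of_ereal_pos)
qed

lemma Gamma_mono: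
  assumes gd: "gain_data Ii gam mu" and s1: "s1 \<in> linf_plus" and s2: "s2 \<in> linf_plus" and le: "vle s1 s2"
  shows "vle (gain_op Ii gam mu s1) (gain_op Ii gam mu s2)"
  unfolding vle_def
proof
  fix i
  have "vle (vI Ii gam i s1) (vI Ii gam i s2)" unfolding vle_def vI_def
    using le Kinf_mono[OF gd_gam[OF gd]] linf_plus_nonneg[OF s1] by (auto simp: vle_def)
  then have "mu i (vI Ii gam i s1) \<le> mu i (vI Ii gam i s2)"
    by (rule gd_mono[OF gd vI_linf[OF gd s1] vI_linf[OF gd s2]])
  then show "gain_op Ii gam mu s1 i \<le> gain_op Ii gam mu s2 i" using mu_vI[OF gd s1] mu_vI[OF gd s2] by simp
qed

lemma gam_bound:
  assumes gd: "gain_data Ii gam mu" and R: "R \<ge> 0"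
  shows "\<exists>B. \<forall>i. \<forall>j\<in>Ii i. gam i j R \<le> B"
proof (rule ccontr)
  define S where "S = {R. \<exists>B. \<forall>i. \<forall>j\<in>Ii i. gam i j R \<le> B}"
  assume "\<not> ?thesis"
  then have RS: "R \<notin> S" unfolding S_def by blast
  define C where "C = {R. R \<ge> 0 \<and> R \<notin> S}"
  define c where "c = Inf C"
  have Cne: "C \<noteq> {}" using RS R C_def by auto
  have Cb: "bdd_below C" unfolding C_def bdd_below_def by auto
  have c0: "c \<ge> 0" unfolding c_def using Cne by (intro cInf_greatest) (auto simp: C_def)
  have below: "r \<in> S" if "0 \<le> r" "r < c" for r
  proof (rule ccontr)
    assume "r \<notin> S"
    then have "r \<in> C" using that C_def by auto
    then have "c \<le> r" unfolding c_def using Cb by (simp add: cInf_lower)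
    then show False using that by auto
  qed
  obtain \<delta> where d: "\<delta> > 0" "\<forall>i. \<forall>j\<in>Ii i. \<forall>r'\<ge>0. \<bar>r' - c\<bar> \<le> \<delta> \<longrightarrow> \<bar>gam i j r' - gam i j c\<bar> \<le> 1"
    using gd_equi[OF gd c0, of 1] by auto
  have cS: "c \<in> S"
  proof (cases "c = 0")
    case True
    then have "\<forall>i. \<forall>j\<in>Ii i. gam i j c \<le> 0" using Kinf_zero[OF gd_gam[OF gd]] by auto
    then show ?thesis unfolding S_def by blast
  next
    case False
    define r where "r = max 0 (c - \<delta>/2)"
    have r: "0 \<le> r" "r < c" "\<bar>r - c\<bar> \<le> \<delta>" using False c0 d(1) r_def by auto
    obtain B where B: "\<forall>i. \<forall>j\<in>Ii i. gam i j r \<le> B" using below[OF r(1,2)] S_def by auto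
    show ?thesis unfolding S_def
    proof (intro CollectI exI[of _ "B+1"] allI ballI)
      fix i j assume j: "j \<in> Ii i"
      show "gam i j c \<le> B + 1" using d(2) r B j by fastforce
    qed
  qed
  then obtain B where B: "\<forall>i. \<forall>j\<in>Ii i. gam i j c \<le> B" using S_def by auto
  have above: "r \<in> S" if "0 \<le> r" "r < c + \<delta>" for r
  proof (cases "r < c")
    case True then show ?thesis using below that by auto
  next
    case False
    then have "\<bar>r - c\<bar> \<le> \<delta>" using that by auto
    then show ?thesis unfolding S_def using d(2) B that
      by (intro CollectI exI[of _ "B+1"] allI ballI) fastforce
  qed
  obtain x where x: "x \<in> C" "x < c + \<delta>" using cInf_less_iff[OF Cne Cb, of "c + \<delta>"] d(1) c_def by auto
  then show False using above C_def by auto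
qed

lemma gam_bound_int:
  assumes gd: "gain_data Ii gam mu" and R: "R \<ge> 0"
  shows "\<exists>B\<ge>0. \<forall>i. \<forall>j\<in>Ii i. \<forall>r. 0 \<le> r \<longrightarrow> r \<le> R \<longrightarrow> gam i j r \<le> B"
proof -
  obtain B where B: "\<forall>i. \<forall>j\<in>Ii i. gam i j R \<le> B" using gam_bound[OF gd R] by auto
  have "gam i j r \<le> max B 0" if j: "j \<in> Ii i" and r: "0 \<le> r" "r \<le> R" for i j r
  proof -
    have "gam i j r \<le> gam i j R" by (rule Kinf_mono[OF gd_gam[OF gd j] r])
    also have "\<dots> \<le> B" using B j by blast
    finally show ?thesis by simp
  qed
  then show ?thesis by (intro exI[of _ "max B 0"]) auto
qed


lemma restr_linf: "s \<in> linf_plus \<Longrightarrow> restr s J \<in> linf_plus"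
  unfolding restr_def
  by (rule linf_plusI[of _ "supnorm s"]) (auto simp: linf_plus_nonneg le_supnorm supnorm_nonneg)

lemma const_linf: "0 \<le> x \<Longrightarrow> (\<lambda>_. x) \<in> linf_plus"
  by (rule linf_plusI[of _ x]) auto

lemma restr_const_bound:
  assumes gd: "gain_data Ii gam mu" and B: "B \<ge> 0"
  shows "\<exists>N. \<forall>i. mu i (restr (\<lambda>_. B) (Ii i)) \<le> ereal N"
proof -
  define A where "A = (\<lambda>x. (\<lambda>_::'a. x)) ` {0..B}"
  have Al: "A \<subseteq> linf_plus" unfolding A_def using const_linf by auto
  have Ab: "bdd_above (supnorm ` A)"
  proof -
    have "supnorm a \<le> B" if "a \<in> A" for a
      using that unfolding A_def by (auto intro!: supnorm_le)
    then show ?thesis unfolding bdd_above_def by blast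
  qed
  obtain \<delta> where d: "\<delta> > 0" "\<forall>s0\<in>A. \<forall>s\<in>linf_plus.
            supnorm (\<lambda>k. s k - s0 k) \<le> \<delta> \<longrightarrow>
            (\<forall>i. \<bar>real_of_ereal (mu i (restr s (Ii i))) - real_of_ereal (mu i (restr s0 (Ii i)))\<bar> \<le> 1)"
    using gd_M4[OF gd Al Ab, of 1] by auto
  define m where "m n = min B (real n * \<delta>)" for n
  have m: "0 \<le> m n" "m n \<le> B" for n using B d(1) m_def by auto
  have ind: "\<forall>i. real_of_ereal (mu i (restr (\<lambda>_. m n) (Ii i))) \<le> real n" for n
  proof (induction n)
    case 0
    have "m 0 = 0" unfolding m_def using B by auto
    then have "restr (\<lambda>_. m 0) (Ii i) = (\<lambda>_. 0)" for i unfolding restr_def by auto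
    then show ?case using gd_mu0[OF gd] by simp
  next
    case (Suc n)
    have inA: "(\<lambda>_. m n) \<in> A" unfolding A_def by (rule image_eqI[of _ _ "m n"]) (use m in auto)
    have sn: "supnorm (\<lambda>k::'a. m (Suc n) - m n) \<le> \<delta>"
    proof (rule supnorm_le)
      have "real (Suc n) * \<delta> = real n * \<delta> + \<delta>" by (simp add: algebra_simps)
      then show "\<bar>m (Suc n) - m n\<bar> \<le> \<delta>" unfolding m_def using d(1) by linarith
    qed
    have D: "\<bar>real_of_ereal (mu i (restr (\<lambda>_. m (Suc n)) (Ii i))) - real_of_ereal (mu i (restr (\<lambda>_. m n) (Ii i)))\<bar> \<le> 1" for i
    proof -
      show ?thesis using bspec[OF d(2) inA, rule_format, OF const_linf[OF m(1)] sn] by blast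
    qed
    show ?case
    proof
      fix i
      have "real_of_ereal (mu i (restr (\<lambda>_. m (Suc n)) (Ii i))) \<le> real_of_ereal (mu i (restr (\<lambda>_. m n) (Ii i))) + 1"
        using D[of i] by linarith
      also have "\<dots> \<le> real n + 1" using Suc.IH by simp
      finally show "real_of_ereal (mu i (restr (\<lambda>_. m (Suc n)) (Ii i))) \<le> real (Suc n)" by simp
    qed
  qed
  obtain n where n: "B / \<delta> \<le> real n" using real_arch_simple by auto
  have "B \<le> real n * \<delta>" using n d(1) by (simp add: field_simps)
  then have mB: "m n = B" unfolding m_def by auto
  show ?thesis
  proof (intro exI[of _ "real n"] allI)
    fix i
    have f: "mu i (restr (\<lambda>_. B) (Ii i)) \<noteq> \<infinity>"
      by (rule gd_M3fin[OF gd gd_fin[OF gd, of i] restr_linf[OF const_linf[OF B]]]) (auto simp: restr_def)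
    have nn: "0 \<le> mu i (restr (\<lambda>_. B) (Ii i))" by (rule gd_nonneg[OF gd restr_linf[OF const_linf[OF B]]])
    have "real_of_ereal (mu i (restr (\<lambda>_. B) (Ii i))) \<le> real n" using ind[of n] mB by simp
    then show "mu i (restr (\<lambda>_. B) (Ii i)) \<le> ereal (real n)"
      using f nn by (cases "mu i (restr (\<lambda>_. B) (Ii i))") auto
  qed
qed

lemma Gamma_linf:
  assumes gd: "gain_data Ii gam mu" and s: "s \<in> linf_plus"
  shows "gain_op Ii gam mu s \<in> linf_plus"
proof -
  obtain B where B: "B \<ge> 0" "\<forall>i. \<forall>j\<in>Ii i. \<forall>r. 0 \<le> r \<longrightarrow> r \<le> supnorm s \<longrightarrow> gam i j r \<le> B"
    using gam_bound_int[OF gd supnorm_nonneg[OF s]] by auto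
  obtain N where N: "\<forall>i. mu i (restr (\<lambda>_. B) (Ii i)) \<le> ereal N" using restr_const_bound[OF gd B(1)] by auto
  show ?thesis
  proof (rule linf_plusI[of _ N])
    fix i
    show "0 \<le> gain_op Ii gam mu s i" using mu_vI[OF gd s] by simp
    have "vle (vI Ii gam i s) (restr (\<lambda>_. B) (Ii i))" unfolding vle_def vI_def restr_def
      using B linf_plus_nonneg[OF s] le_supnorm[OF s] by auto
    then have "mu i (vI Ii gam i s) \<le> mu i (restr (\<lambda>_. B) (Ii i))"
      by (rule gd_mono[OF gd vI_linf[OF gd s] restr_linf[OF const_linf[OF B(1)]]])
    then have "ereal (gain_op Ii gam mu s i) \<le> ereal N" using N mu_vI[OF gd s] by (metis order_trans)
    then show "gain_op Ii gam mu s i \<le> N" by simp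
  qed
qed


lemma supnorm_const: "0 \<le> r \<Longrightarrow> supnorm (\<lambda>_. r) = r"
  unfolding supnorm_def by simp

lemma Psi_linf: "s \<in> Psi T \<Longrightarrow> s \<in> linf_plus"
  unfolding Psi_def by auto

lemma D_to_C:
  assumes "unif_cofinal (Psi T)"
  shows "\<exists>\<sigma>. bounded_Psi_path T \<sigma>"
proof -
  obtain \<phi> where phi: "class_Kinf \<phi>" "\<forall>s\<in>linf_plus. \<exists>sh\<in>Psi T. vle s sh \<and> supnorm sh \<le> \<phi> (supnorm s)"
    using assms unfolding unif_cofinal_def by auto
  define \<sigma> where "\<sigma> r = (SOME sh. sh \<in> Psi T \<and> vle (\<lambda>_. r) sh \<and> supnorm sh \<le> \<phi> r)" for r
  have sig: "\<sigma> r \<in> Psi T \<and> vle (\<lambda>_. r) (\<sigma> r) \<and> supnorm (\<sigma> r) \<le> \<phi> r" if r0: "r \<ge> 0" for r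
  proof -
    have cl: "(\<lambda>_::'a. r) \<in> linf_plus" by (rule const_linf[OF r0])
    obtain sh where sh: "sh \<in> Psi T" "vle (\<lambda>_. r) sh" "supnorm sh \<le> \<phi> (supnorm (\<lambda>_::'a. r))"
      using bspec[OF phi(2) cl] by blast
    then have "\<exists>sh. sh \<in> Psi T \<and> vle (\<lambda>_. r) sh \<and> supnorm sh \<le> \<phi> r"
    proof -
      have "supnorm (\<lambda>_::'a. r) = r" by (rule supnorm_const[OF r0])
      then show ?thesis using sh by auto
    qed
    then show ?thesis unfolding \<sigma>_def by (rule someI_ex)
  qed
  have up: "vle (\<sigma> r) (\<lambda>_. \<phi> r)" if r0: "r \<ge> 0" for r
    unfolding vle_def
  proof
    fix i
    have "\<sigma> r \<in> linf_plus" using sig[OF r0] Psi_linf by blast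
    then have "\<sigma> r i \<le> supnorm (\<sigma> r)" by (rule le_supnorm)
    also have "\<dots> \<le> \<phi> r" using sig[OF r0] by blast
    finally show "\<sigma> r i \<le> \<phi> r" .
  qed
  have a1: "\<forall>r\<ge>0. \<sigma> r \<in> Psi T" using sig by blast
  have a2: "\<forall>r\<ge>0. vle (\<lambda>_. (\<lambda>x. x) r) (\<sigma> r) \<and> vle (\<sigma> r) (\<lambda>_. \<phi> r)" using sig up by simp
  have "bounded_Psi_path T \<sigma>" unfolding bounded_Psi_path_def
    using a1 a2 Kinf_id phi(1) by blast
  then show ?thesis by blast
qed

lemma C_to_D:
  assumes "bounded_Psi_path T \<sigma>"
  shows "unif_cofinal (Psi T)"
proof -
  obtain fmin fmax where f: "class_Kinf fmin" "class_Kinf fmax"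
     "\<forall>r\<ge>0. vle (\<lambda>_. fmin r) (\<sigma> r) \<and> vle (\<sigma> r) (\<lambda>_. fmax r)" and P: "\<forall>r\<ge>0. \<sigma> r \<in> Psi T"
    using assms unfolding bounded_Psi_path_def by blast
  obtain h where h: "class_Kinf h" "\<forall>y\<ge>0. fmin (h y) = y \<and> 0 \<le> h y" using Kinf_inv[OF f(1)] by blast
  show ?thesis unfolding unif_cofinal_def
  proof (intro exI[of _ "\<lambda>x. fmax (h x)"] conjI ballI)
    show "class_Kinf (\<lambda>x. fmax (h x))" by (rule Kinf_comp[OF f(2) h(1)])
    fix s :: "'a \<Rightarrow> real" assume s: "s \<in> linf_plus"
    define r where "r = h (supnorm s)"
    have r: "r \<ge> 0" "fmin r = supnorm s" using h(2) supnorm_nonneg[OF s] r_def by auto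
    have "vle s (\<sigma> r)" using f(3) r le_supnorm[OF s] unfolding vle_def by (metis order_trans)
    moreover have "supnorm (\<sigma> r) \<le> fmax r"
    proof (rule supnorm_le)
      fix i
      have "\<sigma> r \<in> linf_plus" using P r(1) Psi_linf by blast
      then have "0 \<le> \<sigma> r i" by (rule linf_plus_nonneg)
      moreover have "\<sigma> r i \<le> fmax r" using f(3) r(1) unfolding vle_def by blast
      ultimately show "\<bar>\<sigma> r i\<bar> \<le> fmax r" by simp
    qed
    then have "supnorm (\<sigma> r) \<le> fmax (h (supnorm s))" unfolding r_def .
    ultimately show "\<exists>sh\<in>Psi T. vle s sh \<and> supnorm sh \<le> fmax (h (supnorm s))" using P r(1) by blast
  qed
qed

lemma C_to_B:
  assumes gd: "gain_data Ii gam mu" and bp: "bounded_Psi_path (gain_op Ii gam mu) \<sigma>"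
  shows "\<exists>\<sigma>'. bounded_Psi_path (gain_op Ii gam mu) \<sigma>' \<and> increasing_path \<sigma>'"
proof -
  let ?G = "gain_op Ii gam mu"
  obtain fmin fmax where f: "class_Kinf fmin" "class_Kinf fmax"
     "\<forall>r\<ge>0. vle (\<lambda>_. fmin r) (\<sigma> r) \<and> vle (\<sigma> r) (\<lambda>_. fmax r)" and P: "\<forall>r\<ge>0. \<sigma> r \<in> Psi ?G"
    using bp unfolding bounded_Psi_path_def by blast
  define \<tau> where "\<tau> r = (\<lambda>i. INF t\<in>{r..}. \<sigma> t i)" for r
  have bb: "bdd_below ((\<lambda>t. \<sigma> t i) ` {r..})" if "r \<ge> 0" for r i
  proof -
    have "0 \<le> \<sigma> t i" if "t \<in> {r..}" for t
    proof -
      have "\<sigma> t \<in> Psi ?G" using P that \<open>r \<ge> 0\<close> by auto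
      then show ?thesis by (rule linf_plus_nonneg[OF Psi_linf])
    qed
    then show ?thesis unfolding bdd_below_def by blast
  qed
  have low: "fmin r \<le> \<tau> r i" if "r \<ge> 0" for r i
    unfolding \<tau>_def
  proof (rule cINF_greatest)
    fix t assume "t \<in> {r..}"
    then show "fmin r \<le> \<sigma> t i" using f(3) Kinf_mono[OF f(1) that] that unfolding vle_def
      by (meson atLeast_iff order_trans)
  qed auto
  have ub: "\<tau> r i \<le> \<sigma> t i" if "r \<ge> 0" "t \<ge> r" for r t i
    unfolding \<tau>_def using bb[OF that(1)] that by (intro cINF_lower) auto
  have up: "\<tau> r i \<le> fmax r" if "r \<ge> 0" for r i
    using ub[OF that order_refl] f(3) that unfolding vle_def by (meson order_trans)
  have tl: "\<tau> r \<in> linf_plus" if "r \<ge> 0" for r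
    apply (rule linf_plusI[of _ "fmax r"])
    using low[OF that] up[OF that] Kinf_nonneg[OF f(1) that] by (meson order_trans)+
  have tP: "\<tau> r \<in> Psi ?G" if r: "r \<ge> 0" for r
    unfolding Psi_def
  proof (intro CollectI conjI)
    show "\<tau> r \<in> linf_plus" by (rule tl[OF r])
    show "vle (?G (\<tau> r)) (\<tau> r)" unfolding vle_def
    proof
      fix i
      have e: "\<tau> r i = (INF t\<in>{r..}. \<sigma> t i)" unfolding \<tau>_def by simp
      have "?G (\<tau> r) i \<le> (INF t\<in>{r..}. \<sigma> t i)"
      proof (rule cINF_greatest)
        fix t assume t: "t \<in> {r..}"
        then have t0: "t \<ge> 0" using r by auto
        have "vle (\<tau> r) (\<sigma> t)" unfolding vle_def using ub r t by auto
        then have "vle (?G (\<tau> r)) (?G (\<sigma> t))"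
          by (rule Gamma_mono[OF gd tl[OF r] Psi_linf[OF P[rule_format, OF t0]]])
        moreover have "vle (?G (\<sigma> t)) (\<sigma> t)" using P t0 unfolding Psi_def by auto
        ultimately show "?G (\<tau> r) i \<le> \<sigma> t i" unfolding vle_def by (meson order_trans)
      qed auto
      then show "?G (\<tau> r) i \<le> \<tau> r i" unfolding e .
    qed
  qed
  have inc: "increasing_path \<tau>" unfolding increasing_path_def vle_def \<tau>_def
  proof (intro allI impI)
    fix r1 r2 :: real and j assume r: "0 \<le> r1" "r1 \<le> r2"
    show "(INF t\<in>{r1..}. \<sigma> t j) \<le> (INF t\<in>{r2..}. \<sigma> t j)"
      by (rule cINF_superset_mono) (use bb[OF r(1)] r in auto)
  qed
  have "bounded_Psi_path ?G \<tau>" unfolding bounded_Psi_path_def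
    using tP f(1,2) low up unfolding vle_def by blast
  then show ?thesis using inc by blast
qed

lemma vmax_ge: "a i \<le> vmax a b i"
  unfolding vmax_def by simp

lemma D_to_A:
  assumes gd: "gain_data Ii gam mu" and cof: "unif_cofinal (Psi (gain_op Ii gam mu))"
  shows "UGS (\<lambda>s. vmax s (gain_op Ii gam mu s))"
proof -
  let ?G = "gain_op Ii gam mu"
  let ?H = "\<lambda>s. vmax s (?G s)"
  obtain \<phi> where phi: "class_Kinf \<phi>" "\<forall>s\<in>linf_plus. \<exists>sh\<in>Psi ?G. vle s sh \<and> supnorm sh \<le> \<phi> (supnorm s)"
    using cof unfolding unif_cofinal_def by blast
  have "supnorm ((?H ^^ n) s) \<le> \<phi> (supnorm s)" if s: "s \<in> linf_plus" for s n
  proof -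
    obtain sh where sh: "sh \<in> Psi ?G" "vle s sh" "supnorm sh \<le> \<phi> (supnorm s)"
      using bspec[OF phi(2) s] by blast
    have shl: "sh \<in> linf_plus" using sh(1) by (rule Psi_linf)
    have shG: "vle (?G sh) sh" using sh(1) unfolding Psi_def by blast
    have "(?H ^^ k) s \<in> linf_plus \<and> vle ((?H ^^ k) s) sh" for k
    proof (induction k)
      case 0 then show ?case using s sh(2) by simp
    next
      case (Suc k)
      let ?x = "(?H ^^ k) s"
      have xl: "?x \<in> linf_plus" and xs: "vle ?x sh" using Suc.IH by auto
      have "vle (?G ?x) (?G sh)" by (rule Gamma_mono[OF gd xl shl xs])
      then have le: "vle (?H ?x) sh" using xs shG unfolding vle_def vmax_def
        by (meson max.boundedI order_trans)
      have l: "?H ?x \<in> linf_plus"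
      proof (rule linf_plusI[of _ "supnorm sh"])
        fix i
        show "0 \<le> ?H ?x i" using vmax_ge[of ?x i "?G ?x"] linf_plus_nonneg[OF xl, of i] by linarith
        have "?H ?x i \<le> sh i" using le unfolding vle_def by blast
        also have "\<dots> \<le> supnorm sh" by (rule le_supnorm[OF shl])
        finally show "?H ?x i \<le> supnorm sh" .
      qed
      show ?case using le l by simp
    qed
    then have "supnorm ((?H ^^ n) s) \<le> supnorm sh" using supnorm_mono shl by blast
    then show ?thesis using sh(3) by linarith
  qed
  then show ?thesis unfolding UGS_def using phi(1) by blast
qed

lemma A_to_D:
  assumes gd: "gain_data Ii gam mu" and ugs: "UGS (\<lambda>s. vmax s (gain_op Ii gam mu s))"
  shows "unif_cofinal (Psi (gain_op Ii gam mu))"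
proof -
  let ?G = "gain_op Ii gam mu"
  let ?H = "\<lambda>s. vmax s (?G s)"
  obtain \<phi> where phi: "class_Kinf \<phi>" "\<forall>s\<in>linf_plus. \<forall>n. supnorm ((?H ^^ n) s) \<le> \<phi> (supnorm s)"
    using ugs unfolding UGS_def by blast
  have "\<exists>sh\<in>Psi ?G. vle s sh \<and> supnorm sh \<le> \<phi> (supnorm s)" if s: "s \<in> linf_plus" for s
  proof -
    define x where "x n = (?H ^^ n) s" for n
    have xS: "x (Suc n) = ?H (x n)" for n unfolding x_def by simp
    have x0: "x 0 = s" unfolding x_def by simp
    have xl: "x n \<in> linf_plus" for n
    proof (induction n)
      case 0 show ?case using s x0 by simp
    next
      case (Suc n)
      have g: "?G (x n) \<in> linf_plus" by (rule Gamma_linf[OF gd Suc.IH])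
      show ?case unfolding xS
      proof (rule linf_plusI[of _ "supnorm (x n) + supnorm (?G (x n))"])
        fix i
        show "0 \<le> vmax (x n) (?G (x n)) i" unfolding vmax_def using linf_plus_nonneg[OF Suc.IH, of i] by simp
        show "vmax (x n) (?G (x n)) i \<le> supnorm (x n) + supnorm (?G (x n))" unfolding vmax_def
          using le_supnorm[OF Suc.IH, of i] le_supnorm[OF g, of i] supnorm_nonneg[OF Suc.IH] supnorm_nonneg[OF g]
          by simp
      qed
    qed
    have xinc: "x n i \<le> x (Suc n) i" for n i unfolding xS vmax_def by simp
    have xb: "x n i \<le> \<phi> (supnorm s)" for n i
    proof -
      have "x n i \<le> supnorm (x n)" by (rule le_supnorm[OF xl])
      also have "\<dots> \<le> \<phi> (supnorm s)" unfolding x_def using phi(2) s by blast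
      finally show ?thesis .
    qed
    have bdd: "bdd_above (range (\<lambda>n. x n i))" for i using xb unfolding bdd_above_def by blast
    have inc: "incseq (\<lambda>n. x n i)" for i using xinc by (simp add: incseq_SucI)
    define sh where "sh i = (SUP n. x n i)" for i
    have xsh: "x n i \<le> sh i" for n i unfolding sh_def by (rule cSUP_upper[OF UNIV_I bdd])
    have shb: "sh i \<le> \<phi> (supnorm s)" for i unfolding sh_def by (rule cSUP_least) (auto simp: xb)
    have lim: "(\<lambda>n. x n i) \<longlonglongrightarrow> sh i" for i unfolding sh_def by (rule LIMSEQ_incseq_SUP[OF bdd inc])
    have sh0: "0 \<le> sh i" for i using xsh[of 0 i] x0 linf_plus_nonneg[OF s, of i] by simp
    have shl: "sh \<in> linf_plus" by (rule linf_plusI[of _ "\<phi> (supnorm s)"]) (use sh0 shb in auto)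
    have vs: "vle s sh" using xsh[of 0] x0 unfolding vle_def by auto
    have sn: "supnorm sh \<le> \<phi> (supnorm s)"
      by (rule supnorm_le) (use shb sh0 in \<open>simp add: abs_of_nonneg\<close>)
    have psi: "vle (?G sh) sh" unfolding vle_def
    proof (rule allI, rule ccontr)
      fix i assume "\<not> ?G sh i \<le> sh i"
      then have eps: "?G sh i - sh i > 0" by simp
      have v0: "vI Ii gam i sh \<in> linf_plus" by (rule vI_linf[OF gd shl])
      have van: "\<forall>j. j \<notin> Ii i \<longrightarrow> vI Ii gam i t j = 0" for t by (simp add: vI_van)
      obtain \<delta> where d: "\<delta> > 0" "\<forall>t\<in>linf_plus. (\<forall>j. j \<notin> Ii i \<longrightarrow> t j = 0) \<longrightarrow>
               supnorm (\<lambda>k. t k - vI Ii gam i sh k) < \<delta> \<longrightarrow>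
               \<bar>real_of_ereal (mu i t) - real_of_ereal (mu i (vI Ii gam i sh))\<bar> < ?G sh i - sh i"
        using gd_M3cont[OF gd gd_fin[OF gd, of i] v0 van eps] by blast
      have ev: "\<forall>j\<in>Ii i. eventually (\<lambda>n. dist (gam i j (x n j)) (gam i j (sh j)) < \<delta>/2) sequentially"
      proof
        fix j assume j: "j \<in> Ii i"
        have "(\<lambda>n. gam i j (x n j)) \<longlonglongrightarrow> gam i j (sh j)"
          by (rule continuous_on_tendsto_compose[OF Kinf_cont[OF gd_gam[OF gd j]] lim])
            (use sh0 linf_plus_nonneg[OF xl] in auto)
        then show "eventually (\<lambda>n. dist (gam i j (x n j)) (gam i j (sh j)) < \<delta>/2) sequentially"
          using d(1) by (intro tendstoD) auto
      qed
      have "eventually (\<lambda>n. \<forall>j\<in>Ii i. dist (gam i j (x n j)) (gam i j (sh j)) < \<delta>/2) sequentially"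
        by (rule eventually_ball_finite[OF gd_fin[OF gd, of i] ev])
      then obtain n where n: "\<forall>j\<in>Ii i. dist (gam i j (x n j)) (gam i j (sh j)) < \<delta>/2"
        unfolding eventually_sequentially by blast
      have "supnorm (\<lambda>k. vI Ii gam i (x n) k - vI Ii gam i sh k) \<le> \<delta>/2"
      proof (rule supnorm_le)
        fix k
        show "\<bar>vI Ii gam i (x n) k - vI Ii gam i sh k\<bar> \<le> \<delta>/2"
          using n d(1) by (cases "k \<in> Ii i") (auto simp: vI_def dist_real_def less_imp_le)
      qed
      then have lt: "supnorm (\<lambda>k. vI Ii gam i (x n) k - vI Ii gam i sh k) < \<delta>" using d(1) by linarith
      have "\<bar>real_of_ereal (mu i (vI Ii gam i (x n))) - real_of_ereal (mu i (vI Ii gam i sh))\<bar> < ?G sh i - sh i"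
      proof -
        have vx: "vI Ii gam i (x n) \<in> linf_plus" by (rule vI_linf[OF gd xl])
        show ?thesis using d(2) vx van[of "x n"] lt by blast
      qed
      then have "\<bar>?G (x n) i - ?G sh i\<bar> < ?G sh i - sh i" unfolding gain_op_eq .
      moreover have "?G (x n) i \<le> sh i" using xsh[of "Suc n" i] unfolding xS vmax_def by simp
      ultimately show False by linarith
    qed
    show ?thesis using shl psi vs sn unfolding Psi_def by blast
  qed
  then show ?thesis unfolding unif_cofinal_def using phi(1) by blast
qed

theorem proposition2p13:
  fixes Ii :: "'i::countable \<Rightarrow> 'i set"
    and gam :: "'i \<Rightarrow> 'i \<Rightarrow> real \<Rightarrow> real"
    and mu :: "'i \<Rightarrow> ('i \<Rightarrow> real) \<Rightarrow> ereal"
  assumes "gain_data Ii gam mu"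
  defines "\<Gamma> \<equiv> gain_op Ii gam mu"
  shows "(UGS (\<lambda>s. vmax s (\<Gamma> s)) \<longleftrightarrow>
            (\<exists>\<sigma>. bounded_Psi_path \<Gamma> \<sigma> \<and> increasing_path \<sigma>))
       \<and> ((\<exists>\<sigma>. bounded_Psi_path \<Gamma> \<sigma> \<and> increasing_path \<sigma>) \<longleftrightarrow>
            (\<exists>\<sigma>. bounded_Psi_path \<Gamma> \<sigma>))
       \<and> ((\<exists>\<sigma>. bounded_Psi_path \<Gamma> \<sigma>) \<longleftrightarrow> unif_cofinal (Psi \<Gamma>))"
proof -
  note gd = assms(1)
  have AD: "UGS (\<lambda>s. vmax s (\<Gamma> s)) \<Longrightarrow> unif_cofinal (Psi \<Gamma>)" unfolding \<Gamma>_def by (rule A_to_D[OF gd])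
  have DA: "unif_cofinal (Psi \<Gamma>) \<Longrightarrow> UGS (\<lambda>s. vmax s (\<Gamma> s))" unfolding \<Gamma>_def by (rule D_to_A[OF gd])
  have DC: "unif_cofinal (Psi \<Gamma>) \<Longrightarrow> \<exists>\<sigma>. bounded_Psi_path \<Gamma> \<sigma>" by (rule D_to_C)
  have CD: "\<exists>\<sigma>. bounded_Psi_path \<Gamma> \<sigma> \<Longrightarrow> unif_cofinal (Psi \<Gamma>)" using C_to_D by blast
  have CB: "\<exists>\<sigma>. bounded_Psi_path \<Gamma> \<sigma> \<Longrightarrow> \<exists>\<sigma>. bounded_Psi_path \<Gamma> \<sigma> \<and> increasing_path \<sigma>"
    unfolding \<Gamma>_def using C_to_B[OF gd] by blast
  show ?thesis using AD DA DC CD CB by blast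
qed

end
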